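(* Assume $N\ge2$, $A\subset\Lambda$ is measurable with $|A|>0$, $\gamma:A\to(0,\infty)$ is measurable, and $P(x_1,\dots,x_N)\ge\rho^{(N-1)}(x_1,\dots,x_{N-1})\gamma(x_N)$ for a.e. $(x_1,\dots,x_N)\in\Lambda^{N-1}\times A$. Let $\varepsilon>0$ be such that $A_\varepsilon:=\{x\in A:\gamma(x)>\varepsilon\}$ has positive measure. Then $|A_\varepsilon|<\infty$; set $\alpha:=(\varepsilon|A_\varepsilon|)^{-1}$. Let $1\le r<\infty$ and $U\in L^r(\Lambda^N;P\,d^Nx)$. Then for every $1\le m\le N-1$ the set $$T_{N-m}:=\Big\{(x_{m+1},\dots,x_N)\in A_\varepsilon^{N-m}:\ U(\cdot,x_{m+1},\dots,x_N)\text{ is } d^mx\text{-measurable and }\int_{\Lambda^m}|U(\cdot,x_{m+1},\dots,x_N)|^r\rho^{(m)}\,d^mx\le\alpha^{N-m}\|U\|^r_{r,P\,d^Nx}\Big\}$$ does not have measure zero (in particular it is non-empty).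
   Context: $(\Lambda;dx)$ is a complete $\sigma$-finite measure space with non-zero measure $dx$; $d^kx$ denotes the completion of $dx^{\otimes k}$ on $\Lambda^k$, $|E|$ the measure of $E$, and "a.e." refers to these measures. $P$ is a symmetric probability density on $\Lambda^N$: nonnegative, measurable, symmetric, $\int_{\Lambda^N}P\,d^Nx=1$. For $1\le m<N$, $\rho^{(m)}(x_1,\dots,x_m):=\int_{\Lambda^{N-m}}P(x_1,\dots,x_N)\,dx_{m+1}\cdots dx_N$. $\|U\|_{r,P\,d^Nx}=(\int_{\Lambda^N}|U|^rP\,d^Nx)^{1/r}$. *)

theory Defs
  imports "HOL-Probability.Probability" "HOL-Combinatorics.Permutations"
begin

text \<open>Points of \<Lambda>^k are represented as extensional functions on the index set {..<k}
  (index i corresponds to the variable x_(i+1)).  d^k x is the completion of the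
  k-fold product measure.\<close>
definition dk :: "'a measure \<Rightarrow> nat \<Rightarrow> (nat \<Rightarrow> 'a) measure" where
  "dk M k = completion (PiM {..<k} (\<lambda>_. M))"

definition join :: "nat \<Rightarrow> nat \<Rightarrow> (nat \<Rightarrow> 'a) \<Rightarrow> (nat \<Rightarrow> 'a) \<Rightarrow> (nat \<Rightarrow> 'a)" where
  "join m N x y = (\<lambda>i. if i < m then x i else if i < N then y (i - m) else undefined)"

definition rho :: "'a measure \<Rightarrow> nat \<Rightarrow> ((nat \<Rightarrow> 'a) \<Rightarrow> real) \<Rightarrow> nat \<Rightarrow> (nat \<Rightarrow> 'a) \<Rightarrow> ennreal" where
  "rho M N P m x = (\<integral>\<^sup>+ y. ennreal (P (join m N x y)) \<partial>dk M (N - m))"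

end

theory Submission
  imports Defs
begin


locale SFM = fixes M :: "'a measure" assumes sfm: "sigma_finite_measure M"
begin

sublocale PS: product_sigma_finite "\<lambda>_::nat. M"
  unfolding product_sigma_finite_def using sfm by simp

abbreviation "PM k \<equiv> PiM {..<k} (\<lambda>_::nat. M)"

lemma sf_PM: "sigma_finite_measure (PM k)"
  by (rule PS.sigma_finite) auto

lemma join_eq: "m \<le> n \<Longrightarrow> join m n x y = (\<lambda>i\<in>{..<n}. if i < m then x i else y (i - m))"
  by (auto simp: join_def fun_eq_iff)

lemma measurable_join:
  assumes "m \<le> n"
  shows "(\<lambda>p. join m n (fst p) (snd p)) \<in> PM m \<Otimes>\<^sub>M PM (n-m) \<rightarrow>\<^sub>M PM n"
  unfolding join_eq[OF assms]
proof (rule measurable_restrict)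
  fix i assume i: "i \<in> {..<n}"
  show "(\<lambda>p. if i < m then fst p i else snd p (i - m)) \<in> PM m \<Otimes>\<^sub>M PM (n-m) \<rightarrow>\<^sub>M M"
  proof (cases "i < m")
    case True then show ?thesis
      by (simp add: measurable_compose[OF measurable_fst measurable_component_singleton])
  next
    case False then show ?thesis using i assms
      by (simp add: measurable_compose[OF measurable_snd measurable_component_singleton])
  qed
qed

lemma distr_join:
  assumes mn: "m \<le> n"
  shows "distr (PM m \<Otimes>\<^sub>M PM (n-m)) (PM n) (\<lambda>p. join m n (fst p) (snd p)) = PM n"
proof (rule PS.PiM_eqI)
  interpret S2: sigma_finite_measure "PM (n-m)" by (rule sf_PM)
  fix A assume A: "\<And>i. i \<in> {..<n} \<Longrightarrow> A i \<in> sets M"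
  have sub: "\<And>i. i < n \<Longrightarrow> A i \<subseteq> space M" using A sets.sets_into_space by auto
  have pre: "(\<lambda>p. join m n (fst p) (snd p)) -` Pi\<^sub>E {..<n} A \<inter> space (PM m \<Otimes>\<^sub>M PM (n-m))
      = Pi\<^sub>E {..<m} A \<times> Pi\<^sub>E {..<n-m} (\<lambda>i. A (i+m))"
  proof (intro set_eqI iffI)
    fix p assume p: "p \<in> (\<lambda>p. join m n (fst p) (snd p)) -` Pi\<^sub>E {..<n} A \<inter> space (PM m \<Otimes>\<^sub>M PM (n-m))"
    obtain x y where pxy: "p = (x,y)" by (cases p)
    have sp: "x \<in> space (PM m)" "y \<in> space (PM (n-m))" using p pxy by (auto simp: space_pair_measure)
    have J: "join m n x y \<in> Pi\<^sub>E {..<n} A" using p pxy by auto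
    have "\<And>i. i < m \<Longrightarrow> x i \<in> A i"
    proof -
      fix i assume i: "i < m"
      have "join m n x y i \<in> A i" using J i mn by (auto simp: PiE_def Pi_def)
      then show "x i \<in> A i" using i by (simp add: join_def)
    qed
    moreover have "\<And>i. i < n - m \<Longrightarrow> y i \<in> A (i+m)"
    proof -
      fix i assume i: "i < n - m"
      have "join m n x y (i+m) \<in> A (i+m)" using J i by (auto simp: PiE_def Pi_def)
      then show "y i \<in> A (i+m)" using i by (simp add: join_def less_diff_conv)
    qed
    ultimately show "p \<in> Pi\<^sub>E {..<m} A \<times> Pi\<^sub>E {..<n-m} (\<lambda>i. A (i+m))"
      using sp pxy by (auto simp: space_PiM PiE_def)
  next
    fix p assume p: "p \<in> Pi\<^sub>E {..<m} A \<times> Pi\<^sub>E {..<n-m} (\<lambda>i. A (i+m))"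
    obtain x y where pxy: "p = (x,y)" by (cases p)
    have x: "x \<in> Pi\<^sub>E {..<m} A" and y: "y \<in> Pi\<^sub>E {..<n-m} (\<lambda>i. A (i+m))" using p pxy by auto
    have "(x, y) \<in> space (PM m \<Otimes>\<^sub>M PM (n-m))"
      using x y sub mn by (auto simp: space_pair_measure space_PiM PiE_def Pi_def) (meson less_le_trans subsetD, metis subsetD less_diff_conv)
    moreover have "join m n x y \<in> Pi\<^sub>E {..<n} A"
      using x y unfolding join_eq[OF mn]
      by (auto simp: PiE_def Pi_def) (metis add.commute le_add_diff_inverse2 not_less less_diff_conv)
    ultimately show "p \<in> (\<lambda>p. join m n (fst p) (snd p)) -` Pi\<^sub>E {..<n} A \<inter> space (PM m \<Otimes>\<^sub>M PM (n-m))"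
      using pxy by auto
  qed
  have "emeasure (distr (PM m \<Otimes>\<^sub>M PM (n-m)) (PM n) (\<lambda>p. join m n (fst p) (snd p))) (Pi\<^sub>E {..<n} A)
      = emeasure (PM m \<Otimes>\<^sub>M PM (n-m)) (Pi\<^sub>E {..<m} A \<times> Pi\<^sub>E {..<n-m} (\<lambda>i. A (i+m)))"
    using A by (subst emeasure_distr) (auto simp: pre intro!: measurable_join mn)
  also have "\<dots> = (\<Prod>i<m. emeasure M (A i)) * (\<Prod>i<n-m. emeasure M (A (i+m)))"
    using A mn by (subst S2.emeasure_pair_measure_Times) (auto intro!: arg_cong2[where f="(*)"] PS.emeasure_PiM)
  also have "(\<Prod>i<n-m. emeasure M (A (i+m))) = (\<Prod>i\<in>{m..<n}. emeasure M (A i))"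
    using mn prod.shift_bounds_nat_ivl[of "\<lambda>i. emeasure M (A i)" 0 m "n-m"]
    by (simp add: atLeast0LessThan add.commute)
  also have "(\<Prod>i<m. emeasure M (A i)) * \<dots> = (\<Prod>i<n. emeasure M (A i))"
    using mn by (metis prod.atLeastLessThan_concat atLeast0LessThan zero_le)
  finally show "emeasure (distr (PM m \<Otimes>\<^sub>M PM (n-m)) (PM n) (\<lambda>p. join m n (fst p) (snd p))) (Pi\<^sub>E {..<n} A)
      = (\<Prod>i\<in>{..<n}. emeasure M (A i))" .
qed simp_all


lemma join_space:
  assumes "m \<le> n" "x \<in> space (PM m)" "y \<in> space (PM (n-m))"
  shows "join m n x y \<in> space (PM n)"
  using measurable_space[OF measurable_join[OF assms(1)], of "(x,y)"] assms
  by (simp add: space_pair_measure)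

lemma tonelli_xy:
  assumes mn: "m \<le> n" and f: "f \<in> borel_measurable (PM n)"
  shows "integral\<^sup>N (PM n) f = (\<integral>\<^sup>+ x. \<integral>\<^sup>+ y. f (join m n x y) \<partial>PM (n-m) \<partial>PM m)"
proof -
  interpret S2: sigma_finite_measure "PM (n-m)" by (rule sf_PM)
  have fj: "(\<lambda>p. f (join m n (fst p) (snd p))) \<in> borel_measurable (PM m \<Otimes>\<^sub>M PM (n-m))"
    using measurable_comp[OF measurable_join[OF mn] f] by (simp add: comp_def)
  have "integral\<^sup>N (PM n) f = integral\<^sup>N (distr (PM m \<Otimes>\<^sub>M PM (n-m)) (PM n) (\<lambda>p. join m n (fst p) (snd p))) f"
    by (simp add: distr_join[OF mn])
  also have "\<dots> = (\<integral>\<^sup>+ p. f (join m n (fst p) (snd p)) \<partial>(PM m \<Otimes>\<^sub>M PM (n-m)))"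
    using f by (intro nn_integral_distr measurable_join mn) simp
  also have "\<dots> = (\<integral>\<^sup>+ x. \<integral>\<^sup>+ y. f (join m n x y) \<partial>PM (n-m) \<partial>PM m)"
    using S2.nn_integral_fst[OF fj] by simp
  finally show ?thesis .
qed

lemma tonelli_yx:
  assumes mn: "m \<le> n" and f: "f \<in> borel_measurable (PM n)"
  shows "integral\<^sup>N (PM n) f = (\<integral>\<^sup>+ y. \<integral>\<^sup>+ x. f (join m n x y) \<partial>PM m \<partial>PM (n-m))"
proof -
  interpret S1: sigma_finite_measure "PM m" by (rule sf_PM)
  interpret S2: sigma_finite_measure "PM (n-m)" by (rule sf_PM)
  interpret PP: pair_sigma_finite "PM m" "PM (n-m)" ..
  have fj: "(\<lambda>p. f (join m n (fst p) (snd p))) \<in> borel_measurable (PM m \<Otimes>\<^sub>M PM (n-m))"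
    using measurable_comp[OF measurable_join[OF mn] f] by (simp add: comp_def)
  have "integral\<^sup>N (PM n) f = integral\<^sup>N (distr (PM m \<Otimes>\<^sub>M PM (n-m)) (PM n) (\<lambda>p. join m n (fst p) (snd p))) f"
    by (simp add: distr_join[OF mn])
  also have "\<dots> = (\<integral>\<^sup>+ p. f (join m n (fst p) (snd p)) \<partial>(PM m \<Otimes>\<^sub>M PM (n-m)))"
    using f by (intro nn_integral_distr measurable_join mn) simp
  also have "\<dots> = (\<integral>\<^sup>+ y. \<integral>\<^sup>+ x. f (join m n x y) \<partial>PM m \<partial>PM (n-m))"
    using PP.nn_integral_snd[OF fj] by simp
  finally show ?thesis .
qed

end

lemma AE_pullback:
  assumes f: "f \<in> M \<rightarrow>\<^sub>M N" and d: "distr M N f = N" and ae: "AE y in N. Q y"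
  shows "AE x in M. Q (f x)"
proof -
  from ae obtain S where S: "{y\<in>space N. \<not> Q y} \<subseteq> S" "emeasure N S = 0" "S \<in> sets N"
    by (auto elim!: AE_E)
  have "emeasure M (f -` S \<inter> space M) = emeasure (distr M N f) S"
    using S f by (simp add: emeasure_distr)
  also have "\<dots> = 0" using d S by simp
  finally have "emeasure M (f -` S \<inter> space M) = 0" .
  moreover have "f -` S \<inter> space M \<in> sets M" using f S by (simp add: measurable_sets)
  moreover have "{x\<in>space M. \<not> Q (f x)} \<subseteq> f -` S \<inter> space M"
    using S f by (auto dest: measurable_space)
  ultimately show ?thesis by (intro AE_I) auto
qed

context SFM begin

lemma AE_join_xy:
  assumes mn: "m \<le> n" and ae: "AE z in PM n. Q z"
  shows "AE x in PM m. AE y in PM (n-m). Q (join m n x y)"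
proof -
  interpret S1: sigma_finite_measure "PM m" by (rule sf_PM)
  interpret S2: sigma_finite_measure "PM (n-m)" by (rule sf_PM)
  interpret PP: pair_sigma_finite "PM m" "PM (n-m)" ..
  have "AE p in PM m \<Otimes>\<^sub>M PM (n-m). Q (join m n (fst p) (snd p))"
    by (rule AE_pullback[OF measurable_join[OF mn] distr_join[OF mn] ae])
  from PP.AE_pair[OF this] show ?thesis by simp
qed

lemma AE_join_yx:
  assumes mn: "m \<le> n" and ae: "AE z in PM n. Q z"
  shows "AE y in PM (n-m). AE x in PM m. Q (join m n x y)"
proof -
  interpret S1: sigma_finite_measure "PM m" by (rule sf_PM)
  interpret S2: sigma_finite_measure "PM (n-m)" by (rule sf_PM)
  interpret PP: pair_sigma_finite "PM m" "PM (n-m)" ..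
  from ae obtain S where S: "{z\<in>space (PM n). \<not> Q z} \<subseteq> S" "emeasure (PM n) S = 0" "S \<in> sets (PM n)"
    by (auto elim!: AE_E)
  have "AE z in PM n. z \<notin> S" using S by (intro AE_I[of _ _ S]) auto
  then have ae2: "AE p in PM m \<Otimes>\<^sub>M PM (n-m). join m n (fst p) (snd p) \<notin> S"
    by (rule AE_pullback[OF measurable_join[OF mn] distr_join[OF mn]])
  have meas: "{p \<in> space (PM m \<Otimes>\<^sub>M PM (n-m)). join m n (fst p) (snd p) \<notin> S} \<in> sets (PM m \<Otimes>\<^sub>M PM (n-m))"
  proof -
    have "{p \<in> space (PM m \<Otimes>\<^sub>M PM (n-m)). join m n (fst p) (snd p) \<notin> S}
        = space (PM m \<Otimes>\<^sub>M PM (n-m)) - ((\<lambda>p. join m n (fst p) (snd p)) -` S \<inter> space (PM m \<Otimes>\<^sub>M PM (n-m)))"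
      by auto
    also have "\<dots> \<in> sets (PM m \<Otimes>\<^sub>M PM (n-m))"
      using measurable_sets[OF measurable_join[OF mn] S(3)] by auto
    finally show ?thesis .
  qed
  have "AE x in PM m. AE y in PM (n-m). join m n x y \<notin> S"
    using ae2 PP.AE_pair_iff[of "\<lambda>x y. join m n x y \<notin> S"] meas by simp
  then have "AE y in PM (n-m). AE x in PM m. join m n x y \<notin> S"
    using PP.AE_commute[of "\<lambda>x y. join m n x y \<notin> S"] meas by simp
  then show ?thesis
    apply (rule AE_mp)
    apply (rule AE_I2)
    apply (intro impI)
    apply (erule AE_mp)
    apply (rule AE_I2)
    using S(1) join_space[OF mn] by auto
qed

lemma restrict_join: "m \<le> n \<Longrightarrow> x \<in> space (PM m) \<Longrightarrow> restrict (join m n x y) {..<m} = x"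
  by (auto simp: join_def fun_eq_iff space_PiM PiE_def extensional_def)

lemma AE_restrict:
  assumes mn: "m \<le> n" and ae: "AE x in PM m. Q x"
  shows "AE z in PM n. Q (restrict z {..<m})"
proof -
  interpret S2: sigma_finite_measure "PM (n-m)" by (rule sf_PM)
  from ae obtain S where S: "{x\<in>space (PM m). \<not> Q x} \<subseteq> S" "emeasure (PM m) S = 0" "S \<in> sets (PM m)"
    by (auto elim!: AE_E)
  have rm: "(\<lambda>z. restrict z {..<m}) \<in> PM n \<rightarrow>\<^sub>M PM m"
    using mn by (intro measurable_restrict_subset) auto
  let ?B = "(\<lambda>z. restrict z {..<m}) -` S \<inter> space (PM n)"
  have B: "?B \<in> sets (PM n)" using measurable_sets[OF rm S(3)] .
  have "emeasure (PM n) ?B = emeasure (distr (PM m \<Otimes>\<^sub>M PM (n-m)) (PM n) (\<lambda>p. join m n (fst p) (snd p))) ?B"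
    by (simp add: distr_join[OF mn])
  also have "\<dots> = emeasure (PM m \<Otimes>\<^sub>M PM (n-m)) ((\<lambda>p. join m n (fst p) (snd p)) -` ?B \<inter> space (PM m \<Otimes>\<^sub>M PM (n-m)))"
    using B by (rule emeasure_distr[OF measurable_join[OF mn]])
  also have "(\<lambda>p. join m n (fst p) (snd p)) -` ?B \<inter> space (PM m \<Otimes>\<^sub>M PM (n-m)) = (S \<inter> space (PM m)) \<times> space (PM (n-m))"
    using join_space[OF mn] restrict_join[OF mn] by (auto simp: space_pair_measure)
  also have "emeasure (PM m \<Otimes>\<^sub>M PM (n-m)) ((S \<inter> space (PM m)) \<times> space (PM (n-m))) = 0"
    using S by (subst S2.emeasure_pair_measure_Times) (auto simp: Int_absorb2 sets.sets_into_space)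
  finally have "emeasure (PM n) ?B = 0" .
  moreover have "{z\<in>space (PM n). \<not> Q (restrict z {..<m})} \<subseteq> ?B"
    using S(1) measurable_space[OF rm] by auto
  ultimately show ?thesis using B by (intro AE_I) auto
qed


lemma join_meas2:
  assumes "m \<le> n" "x \<in> space (PM m)"
  shows "(\<lambda>y. join m n x y) \<in> PM (n-m) \<rightarrow>\<^sub>M PM n"
  using measurable_compose_Pair1[OF assms(2) measurable_join[OF assms(1)]] by simp

lemma join_meas1:
  assumes "m \<le> n" "y \<in> space (PM (n-m))"
  shows "(\<lambda>x. join m n x y) \<in> PM m \<rightarrow>\<^sub>M PM n"
proof -
  have "(\<lambda>x. (x,y)) \<in> PM m \<rightarrow>\<^sub>M PM m \<Otimes>\<^sub>M PM (n-m)" using assms(2) by measurable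
  from measurable_comp[OF this measurable_join[OF assms(1)]] show ?thesis by (simp add: comp_def)
qed

end

lemma join_assoc:
  assumes "a \<le> b" "b \<le> c"
  shows "join a c x (join (b-a) (c-a) u t) = join b c (join a b x u) t"
  using assms by (auto simp: join_def fun_eq_iff)

definition sig :: "nat \<Rightarrow> nat \<Rightarrow> nat \<Rightarrow> nat" where
  "sig N j n = (if n < j then n else if n < N - 1 then n + 1 else if n = N - 1 then j else n)"

lemma restrict_sig:
  assumes "j < N"
  shows "restrict (join (Suc j) N w u \<circ> sig N j) {..<N-1} = join j (N-1) (restrict w {..<j}) u"
  using assms by (auto simp: join_def sig_def fun_eq_iff)

locale RHO = SFM + fixes N :: nat and P1 :: "(nat \<Rightarrow> 'a) \<Rightarrow> real"
  assumes P1_meas: "P1 \<in> borel_measurable (PM N)"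
begin

definition "rh j x = (\<integral>\<^sup>+ y. ennreal (P1 (join j N x y)) \<partial>PM (N-j))"

lemma rh_meas: "j \<le> N \<Longrightarrow> rh j \<in> borel_measurable (PM j)"
proof -
  assume jN: "j \<le> N"
  interpret S2: sigma_finite_measure "PM (N-j)" by (rule sf_PM)
  have "(\<lambda>p. ennreal (P1 (join j N (fst p) (snd p)))) \<in> borel_measurable (PM j \<Otimes>\<^sub>M PM (N-j))"
    using measurable_comp[OF measurable_join[OF jN] P1_meas] by (simp add: comp_def)
  from S2.borel_measurable_nn_integral_fst[OF this] show ?thesis
    unfolding rh_def[abs_def] by simp
qed

lemma marginal:
  assumes jN: "j \<le> N - 1" and N1: "1 \<le> N" and x: "x \<in> space (PM j)"
  shows "(\<integral>\<^sup>+ u. rh (N-1) (join j (N-1) x u) \<partial>PM (N-1-j)) = rh j x"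
proof -
  have f: "(\<lambda>y. ennreal (P1 (join j N x y))) \<in> borel_measurable (PM (N-j))"
    using measurable_comp[OF join_meas2[of j N x] P1_meas] jN x by (simp add: comp_def)
  have "rh j x = (\<integral>\<^sup>+ u. \<integral>\<^sup>+ t. ennreal (P1 (join j N x (join (N-1-j) (N-j) u t))) \<partial>PM (N-j-(N-1-j)) \<partial>PM (N-1-j))"
    unfolding rh_def using jN by (subst tonelli_xy[OF _ f]) auto
  also have "\<dots> = (\<integral>\<^sup>+ u. rh (N-1) (join j (N-1) x u) \<partial>PM (N-1-j))"
  proof -
    have e1: "N-j-(N-1-j) = N - (N-1)" using jN N1 by simp
    have e2: "join j N x (join (N-1-j) (N-j) u t) = join (N-1) N (join j (N-1) x u) t" for u t
      using join_assoc[of j "N-1" N x u t] jN N1 by (simp add: diff_diff_left)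
    show ?thesis unfolding rh_def e1 e2 ..
  qed
  finally show ?thesis by simp
qed

end

locale RHO2 = RHO + fixes A :: "'a set" and G :: "'a \<Rightarrow> real"
  assumes Hj: "\<And>j. j < N \<Longrightarrow> AE z in PM N. z j \<in> A \<longrightarrow>
      rh (N-1) (restrict (z \<circ> sig N j) {..<N-1}) * ennreal (G (z j)) \<le> ennreal (P1 z)"
  and N1: "1 \<le> N"
begin

lemma restrict_space: "j \<le> k \<Longrightarrow> w \<in> space (PM k) \<Longrightarrow> restrict w {..<j} \<in> space (PM j)"
  by (auto simp: space_PiM PiE_def Pi_def)

lemma lemC:
  assumes jN: "j < N"
  shows "AE w in PM (Suc j). w j \<in> A \<longrightarrow> ennreal (G (w j)) * rh j (restrict w {..<j}) \<le> rh (Suc j) w"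
proof -
  have SjN: "Suc j \<le> N" using jN by simp
  have e: "N - 1 - j = N - Suc j" by simp
  have jj: "\<And>w u. join (Suc j) N w u j = w j" using jN by (simp add: join_def)
  from AE_join_xy[OF SjN Hj[OF jN]]
  have "AE w in PM (Suc j). AE u in PM (N - Suc j). w j \<in> A \<longrightarrow>
      rh (N-1) (join j (N-1) (restrict w {..<j}) u) * ennreal (G (w j)) \<le> ennreal (P1 (join (Suc j) N w u))"
    by (simp only: restrict_sig[OF jN] jj)
  then show ?thesis
  proof (rule AE_mp, intro AE_I2 impI)
    fix w assume w: "w \<in> space (PM (Suc j))" and wj: "w j \<in> A"
      and h: "AE u in PM (N - Suc j). w j \<in> A \<longrightarrow>
      rh (N-1) (join j (N-1) (restrict w {..<j}) u) * ennreal (G (w j)) \<le> ennreal (P1 (join (Suc j) N w u))"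
    have wr: "restrict w {..<j} \<in> space (PM j)" using restrict_space[OF _ w] by simp
    have jN1: "j \<le> N - 1" using jN by simp
    have mf: "(\<lambda>u. rh (N-1) (join j (N-1) (restrict w {..<j}) u)) \<in> borel_measurable (PM (N-1-j))"
      using measurable_comp[OF join_meas2[OF jN1 wr] rh_meas[of "N-1"]] by (simp add: comp_def)
    have "ennreal (G (w j)) * rh j (restrict w {..<j})
        = ennreal (G (w j)) * (\<integral>\<^sup>+ u. rh (N-1) (join j (N-1) (restrict w {..<j}) u) \<partial>PM (N-1-j))"
      using marginal[OF jN1 N1 wr] by simp
    also have "\<dots> = (\<integral>\<^sup>+ u. ennreal (G (w j)) * rh (N-1) (join j (N-1) (restrict w {..<j}) u) \<partial>PM (N-1-j))"
      using mf by (rule nn_integral_cmult[symmetric])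
    also have "\<dots> \<le> (\<integral>\<^sup>+ u. ennreal (P1 (join (Suc j) N w u)) \<partial>PM (N-1-j))"
      unfolding e using h wj by (intro nn_integral_mono_AE) (auto elim!: AE_mp simp: mult.commute)
    also have "\<dots> = rh (Suc j) w" unfolding rh_def e ..
    finally show "ennreal (G (w j)) * rh j (restrict w {..<j}) \<le> rh (Suc j) w" .
  qed
qed


lemma rh_N: "z \<in> space (PM N) \<Longrightarrow> rh N (restrict z {..<N}) = ennreal (P1 z)"
proof -
  assume z: "z \<in> space (PM N)"
  have "join N N (restrict z {..<N}) (\<lambda>k. undefined) = z"
    using z by (auto simp: join_def fun_eq_iff space_PiM PiE_def extensional_def)
  then show ?thesis unfolding rh_def by (simp add: PS.nn_integral_empty)
qed

lemma lemF:
  assumes eps: "\<epsilon> > 0" and AeA: "Ae \<subseteq> A" and AeG: "\<And>x. x \<in> Ae \<Longrightarrow> \<epsilon> < G x"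
    and jN: "j \<le> N"
  shows "AE z in PM N. (\<forall>i. j \<le> i \<and> i < N \<longrightarrow> z i \<in> Ae) \<longrightarrow>
      ennreal (\<epsilon>^(N-j)) * rh j (restrict z {..<j}) \<le> ennreal (P1 z)"
proof -
  have "\<forall>k. k \<le> N \<longrightarrow> (AE z in PM N. (\<forall>i. N - k \<le> i \<and> i < N \<longrightarrow> z i \<in> Ae) \<longrightarrow>
      ennreal (\<epsilon>^(N-(N-k))) * rh (N-k) (restrict z {..<N-k}) \<le> ennreal (P1 z))" (is "\<forall>k. _ \<longrightarrow> ?F k")
  proof (intro allI)
    fix k show "k \<le> N \<longrightarrow> ?F k"
    proof (induction k)
      case 0
      show ?case by (intro impI AE_I2) (simp only: rh_N diff_self_eq_0 diff_zero power_0 ennreal_1 mult_1 order_refl)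
    next
      case (Suc k)
      show ?case
      proof
        assume kN: "Suc k \<le> N"
        define j where "j = N - Suc k"
        have jN': "j < N" and Sj: "Suc j = N - k" using kN by (auto simp: j_def)
        have IH: "?F k" using Suc.IH[THEN mp, OF Suc_leD[OF kN]] .
        have C: "AE z in PM N. z j \<in> A \<longrightarrow> ennreal (G (z j)) * rh j (restrict z {..<j}) \<le> rh (Suc j) (restrict z {..<Suc j})"
        proof -
          have i: "{..<Suc j} \<inter> {..<j} = {..<j}" by auto
          show ?thesis using AE_restrict[OF _ lemC[OF jN'], of N] jN' by (simp add: i)
        qed
        have "AE z in PM N. (\<forall>i. j \<le> i \<and> i < N \<longrightarrow> z i \<in> Ae) \<longrightarrow>
            ennreal (\<epsilon>^(N-j)) * rh j (restrict z {..<j}) \<le> ennreal (P1 z)"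
          using IH C
        proof (eventually_elim)
          case (elim z)
          show ?case
          proof
            assume H: "\<forall>i. j \<le> i \<and> i < N \<longrightarrow> z i \<in> Ae"
            have zj: "z j \<in> Ae" using H jN' by auto
            have H2: "\<forall>i. N - k \<le> i \<and> i < N \<longrightarrow> z i \<in> Ae" using H Sj by auto
            have e1: "ennreal (\<epsilon>^(N-j)) = ennreal (\<epsilon>^(N-(N-k))) * ennreal \<epsilon>"
              using eps Sj jN' by (simp add: ennreal_mult[symmetric] power_Suc2[symmetric] Suc_diff_le j_def)
            have "ennreal (\<epsilon>^(N-j)) * rh j (restrict z {..<j})
                = ennreal (\<epsilon>^(N-(N-k))) * (ennreal \<epsilon> * rh j (restrict z {..<j}))"
              by (simp add: e1 mult.assoc)
            also have "\<dots> \<le> ennreal (\<epsilon>^(N-(N-k))) * (ennreal (G (z j)) * rh j (restrict z {..<j}))"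
              using AeG[OF zj] by (intro mult_left_mono mult_right_mono ennreal_leI) auto
            also have "\<dots> \<le> ennreal (\<epsilon>^(N-(N-k))) * rh (N-k) (restrict z {..<N-k})"
              using elim(2) zj AeA Sj by (intro mult_left_mono) auto
            also have "\<dots> \<le> ennreal (P1 z)" using elim(1) H2 by simp
            finally show "ennreal (\<epsilon>^(N-j)) * rh j (restrict z {..<j}) \<le> ennreal (P1 z)" .
          qed
        qed
        then show "?F (Suc k)" by (simp add: j_def)
      qed
    qed
  qed
  from this[rule_format, of "N - j"] jN show ?thesis by simp
qed

end

lemma meas_completion_AE:
  fixes f g :: "'b \<Rightarrow> real"
  assumes f: "f \<in> borel_measurable M" and ae: "AE x in M. g x = f x"
  shows "g \<in> borel_measurable (completion M)"
proof -
  from ae obtain S where S: "{x\<in>space M. \<not> g x = f x} \<subseteq> S" "emeasure M S = 0" "S \<in> sets M"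
    by (auto elim!: AE_E)
  have Sn: "S \<in> null_sets M" using S by auto
  show ?thesis
  proof (rule borel_measurableI)
    fix B :: "real set" assume B: "open B"
    have "g -` B \<inter> space (completion M) = ((f -` B \<inter> space M) - S) \<union> (g -` B \<inter> space M \<inter> S)"
      using S(1) by auto
    moreover have "(f -` B \<inter> space M) - S \<in> sets (completion M)"
      using f B S(3) by (intro sets_completionI_sets sets.Diff measurable_sets[OF f]) auto
    moreover have "g -` B \<inter> space M \<inter> S \<in> sets (completion M)"
      by (rule sets_completionI_sub[OF Sn]) auto
    ultimately show "g -` B \<inter> space (completion M) \<in> sets (completion M)" by (metis sets.Un space_completion)
  qed
qed

lemma sig_N: "j < N \<Longrightarrow> sig N j (N - 1) = j"
  by (auto simp: sig_def)

lemma sig_permutes: "j < N \<Longrightarrow> sig N j permutes {..<N}"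
proof (rule bij_imp_permutes)
  assume jN: "j < N"
  have inj: "inj_on (sig N j) {..<N}"
    unfolding inj_on_def sig_def by (auto split: if_splits)
  have sub: "sig N j ` {..<N} \<subseteq> {..<N}" using jN by (auto simp: sig_def)
  show "bij_betw (sig N j) {..<N} {..<N}"
    unfolding bij_betw_def using inj endo_inj_surj[OF _ sub inj] by simp
  show "\<And>x. x \<notin> {..<N} \<Longrightarrow> sig N j x = x" using jN by (auto simp: sig_def)
qed

context SFM begin

lemma distr_reindex:
  assumes f: "bij_betw f {..<n} {..<n}"
  shows "distr (PM n) (PM n) (\<lambda>z. \<lambda>i\<in>{..<n}. z (f i)) = PM n"
proof (rule PS.PiM_eqI)
  have fm: "(\<lambda>z. \<lambda>i\<in>{..<n}. z (f i)) \<in> PM n \<rightarrow>\<^sub>M PM n"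
    using f by (intro measurable_restrict measurable_component_singleton) (auto simp: bij_betw_def)
  define g where "g = inv_into {..<n} f"
  have g: "bij_betw g {..<n} {..<n}" unfolding g_def using f by (rule bij_betw_inv_into)
  have fg: "\<And>k. k < n \<Longrightarrow> f (g k) = k" unfolding g_def using f
    by (simp add: bij_betw_inv_into_right)
  have gf: "\<And>i. i < n \<Longrightarrow> g (f i) = i" unfolding g_def using f
    by (simp add: bij_betw_inv_into_left)
  have fn: "\<And>i. i < n \<Longrightarrow> f i < n" using f by (auto simp: bij_betw_def)
  have gn: "\<And>i. i < n \<Longrightarrow> g i < n" using g by (auto simp: bij_betw_def)
  fix A assume A: "\<And>i. i \<in> {..<n} \<Longrightarrow> A i \<in> sets M"
  have pre: "(\<lambda>z. \<lambda>i\<in>{..<n}. z (f i)) -` Pi\<^sub>E {..<n} A \<inter> space (PM n) = Pi\<^sub>E {..<n} (\<lambda>k. A (g k))"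
  proof (intro set_eqI iffI)
    fix z assume z: "z \<in> (\<lambda>z. \<lambda>i\<in>{..<n}. z (f i)) -` Pi\<^sub>E {..<n} A \<inter> space (PM n)"
    then have "\<And>i. i < n \<Longrightarrow> z (f i) \<in> A i" by (auto simp: PiE_def Pi_def)
    then have "\<And>k. k < n \<Longrightarrow> z k \<in> A (g k)" using fg gn by metis
    then show "z \<in> Pi\<^sub>E {..<n} (\<lambda>k. A (g k))" using z by (auto simp: space_PiM PiE_def)
  next
    fix z assume z: "z \<in> Pi\<^sub>E {..<n} (\<lambda>k. A (g k))"
    then have "\<And>i. i < n \<Longrightarrow> z (f i) \<in> A i" using gf fn by (metis PiE_mem lessThan_iff)
    moreover have "z \<in> space (PM n)"
    proof -
      have "\<forall>k<n. z k \<in> space M" using z A gn sets.sets_into_space by (metis PiE_mem lessThan_iff subsetD)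
      then show ?thesis using z by (auto simp: space_PiM PiE_def Pi_def)
    qed
    ultimately show "z \<in> (\<lambda>z. \<lambda>i\<in>{..<n}. z (f i)) -` Pi\<^sub>E {..<n} A \<inter> space (PM n)"
      by auto
  qed
  have "emeasure (distr (PM n) (PM n) (\<lambda>z. \<lambda>i\<in>{..<n}. z (f i))) (Pi\<^sub>E {..<n} A)
      = emeasure (PM n) (Pi\<^sub>E {..<n} (\<lambda>k. A (g k)))"
    using A by (subst emeasure_distr[OF fm]) (auto simp: pre)
  also have "\<dots> = (\<Prod>k<n. emeasure M (A (g k)))"
    using A gn by (intro PS.emeasure_PiM) auto
  also have "\<dots> = (\<Prod>i<n. emeasure M (A i))"
    using prod.reindex_bij_betw[OF g, of "\<lambda>i. emeasure M (A i)"] by simp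
  finally show "emeasure (distr (PM n) (PM n) (\<lambda>z. \<lambda>i\<in>{..<n}. z (f i))) (Pi\<^sub>E {..<n} A)
      = (\<Prod>i\<in>{..<n}. emeasure M (A i))" by simp
qed simp_all

lemma AE_sig:
  assumes jN: "j < N" and ae: "AE z in PM N. Q z"
  shows "AE z in PM N. Q (z \<circ> sig N j)"
proof -
  have bij: "bij_betw (sig N j) {..<N} {..<N}"
    using sig_permutes[OF jN] by (rule permutes_imp_bij)
  have fm: "(\<lambda>z. \<lambda>i\<in>{..<N}. z (sig N j i)) \<in> PM N \<rightarrow>\<^sub>M PM N"
    using bij by (intro measurable_restrict measurable_component_singleton) (auto simp: bij_betw_def)
  have "AE z in PM N. Q (\<lambda>i\<in>{..<N}. z (sig N j i))"
    by (rule AE_pullback[OF fm distr_reindex[OF bij] ae])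
  then show ?thesis
  proof (rule AE_mp, intro AE_I2 impI)
    fix z assume z: "z \<in> space (PM N)" and "Q (\<lambda>i\<in>{..<N}. z (sig N j i))"
    moreover have "(\<lambda>i\<in>{..<N}. z (sig N j i)) = z \<circ> sig N j"
      using z jN by (auto simp: fun_eq_iff space_PiM PiE_def extensional_def sig_def)
    ultimately show "Q (z \<circ> sig N j)" by simp
  qed
qed

lemma meas_int_y:
  assumes mN: "m \<le> N" and h: "h \<in> borel_measurable (PM N)"
  shows "(\<lambda>y. \<integral>\<^sup>+ x. h (join m N x y) \<partial>PM m) \<in> borel_measurable (PM (N-m))"
proof -
  interpret S1: sigma_finite_measure "PM m" by (rule sf_PM)
  have sw: "(\<lambda>p. (snd p, fst p)) \<in> PM (N-m) \<Otimes>\<^sub>M PM m \<rightarrow>\<^sub>M PM m \<Otimes>\<^sub>M PM (N-m)" by measurable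
  have "(\<lambda>p. h (join m N (snd p) (fst p))) \<in> borel_measurable (PM (N-m) \<Otimes>\<^sub>M PM m)"
    using measurable_comp[OF measurable_comp[OF sw measurable_join[OF mN]] h] by (simp add: comp_def)
  from S1.borel_measurable_nn_integral_fst[OF this] show ?thesis by simp
qed

end

context RHO begin

lemma rho_rh:
  assumes jN: "j \<le> N" and ae: "AE z in PM N. P z = P1 z"
  shows "AE x in PM j. rho M N P j x = rh j x"
  using AE_join_xy[OF jN ae]
proof (rule AE_mp, intro AE_I2 impI)
  fix x assume "AE y in PM (N-j). P (join j N x y) = P1 (join j N x y)"
  then show "rho M N P j x = rh j x"
    unfolding rho_def rh_def dk_def nn_integral_completion
    by (intro nn_integral_cong_AE) (auto elim!: AE_mp)
qed

end



lemma ennreal_scale_bound: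
  fixes a b :: ennreal
  assumes e: "e > 0" and h: "ennreal (e^n) * a \<le> b"
  shows "a \<le> ennreal ((1/e)^n) * b"
proof -
  have "ennreal ((1/e)^n) * ennreal (e^n) = ennreal ((1/e)^n * e^n)"
    using e by (simp add: ennreal_mult)
  also have "(1/e)^n * e^n = 1" using e by (simp add: power_mult_distrib[symmetric])
  finally have one: "ennreal ((1/e)^n) * ennreal (e^n) = 1" by simp
  have "a = ennreal ((1/e)^n) * (ennreal (e^n) * a)"
    by (simp add: mult.assoc[symmetric] one)
  also have "\<dots> \<le> ennreal ((1/e)^n) * b" using h by (rule mult_left_mono) simp
  finally show ?thesis .
qed

theorem lemma5:
  fixes M :: "'a measure" and N :: nat and P :: "(nat \<Rightarrow> 'a) \<Rightarrow> real"
    and A :: "'a set" and \<gamma> :: "'a \<Rightarrow> real" and \<epsilon> :: real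
  assumes complete: "complete_measure M"
    and sfin: "sigma_finite_measure M"
    and nonzero: "emeasure M (space M) \<noteq> 0"
    and N2: "N \<ge> 2"
    and P_meas: "P \<in> borel_measurable (dk M N)"
    and P_nonneg: "\<forall>x\<in>space (dk M N). P x \<ge> 0"
    and P_sym: "\<forall>\<sigma>. \<sigma> permutes {..<N} \<longrightarrow> (\<forall>x\<in>space (dk M N). P (x \<circ> \<sigma>) = P x)"
    and P_int: "(\<integral>\<^sup>+ x. ennreal (P x) \<partial>dk M N) = 1"
    and A_meas: "A \<in> sets M"
    and A_pos: "emeasure M A > 0"
    and \<gamma>_meas: "\<gamma> \<in> borel_measurable (restrict_space M A)"
    and \<gamma>_pos: "\<forall>x\<in>A. \<gamma> x > 0"
    and P_lower: "AE x in dk M N. x (N - 1) \<in> A \<longrightarrow>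
        rho M N P (N - 1) (restrict x {..<N - 1}) * ennreal (\<gamma> (x (N - 1))) \<le> ennreal (P x)"
    and \<epsilon>_pos: "\<epsilon> > 0"
    and A\<epsilon>_pos: "emeasure M {x \<in> A. \<gamma> x > \<epsilon>} > 0"
  shows "emeasure M {x \<in> A. \<gamma> x > \<epsilon>} < \<infinity> \<and>
    (\<forall>(r::real) (U::(nat \<Rightarrow> 'a) \<Rightarrow> real) m.
       1 \<le> r \<longrightarrow>
       U \<in> borel_measurable (dk M N) \<longrightarrow>
       (\<integral>\<^sup>+ x. ennreal (\<bar>U x\<bar> powr r * P x) \<partial>dk M N) < \<infinity> \<longrightarrow>
       1 \<le> m \<longrightarrow> m \<le> N - 1 \<longrightarrow>
       (let A\<epsilon> = {x \<in> A. \<gamma> x > \<epsilon>};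
            \<alpha> = 1 / (\<epsilon> * measure M A\<epsilon>);
            T = {y \<in> PiE {..<N - m} (\<lambda>_. A\<epsilon>).
                   (\<lambda>x. U (join m N x y)) \<in> borel_measurable (dk M m) \<and>
                   (\<integral>\<^sup>+ x. ennreal (\<bar>U (join m N x y)\<bar> powr r) * rho M N P m x \<partial>dk M m)
                     \<le> ennreal (\<alpha> ^ (N - m)) * (\<integral>\<^sup>+ x. ennreal (\<bar>U x\<bar> powr r * P x) \<partial>dk M N)}
        in \<not> (\<exists>S \<in> sets (dk M (N - m)). T \<subseteq> S \<and> emeasure (dk M (N - m)) S = 0)))"
proof -
  interpret SFM M by (rule SFM.intro[OF sfin])
  have dkc: "\<And>k. dk M k = completion (PM k)" by (simp add: dk_def)
  have N1: "1 \<le> N" using N2 by simp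
  have "P \<in> borel_measurable (completion (PM N))" using P_meas dkc by simp
  from completion_ex_borel_measurable_real[OF this] obtain P0 where
    P0: "P0 \<in> borel_measurable (PM N)" "AE z in PM N. P z = P0 z" by blast
  define P1 where "P1 z = max 0 (P0 z)" for z
  have P1m: "P1 \<in> borel_measurable (PM N)" unfolding P1_def using P0(1) by measurable
  have P1nn: "\<And>z. 0 \<le> P1 z" by (simp add: P1_def)
  have PP1: "AE z in PM N. P z = P1 z"
    using P0(2)
  proof (rule AE_mp, intro AE_I2 impI)
    fix z assume "z \<in> space (PM N)" "P z = P0 z"
    then show "P z = P1 z" using P_nonneg dkc unfolding P1_def by (metis max.absorb2 space_completion)
  qed
  interpret RHO M N P1 by (intro RHO.intro RHO_axioms.intro SFM.intro sfin P1m)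
  define G where "G x = indicator A x * \<gamma> x" for x
  have Gm: "G \<in> borel_measurable M"
  proof -
    have "A \<inter> space M \<in> sets M" using A_meas by auto
    from borel_measurable_restrict_space_iff[OF this, of \<gamma>] \<gamma>_meas
    have "(\<lambda>x. indicator A x *\<^sub>R \<gamma> x) \<in> borel_measurable M" by blast
    then show ?thesis unfolding G_def[abs_def] by simp
  qed
  have GA: "\<And>x. x \<in> A \<Longrightarrow> G x = \<gamma> x" by (simp add: G_def)
  have PL: "AE z in PM N. z (N-1) \<in> A \<longrightarrow>
      rho M N P (N-1) (restrict z {..<N-1}) * ennreal (\<gamma> (z (N-1))) \<le> ennreal (P z)"
    using P_lower unfolding dk_def AE_completion_iff .
  have RR: "AE z in PM N. rho M N P (N-1) (restrict z {..<N-1}) = rh (N-1) (restrict z {..<N-1})"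
    by (rule AE_restrict[OF _ rho_rh[OF _ PP1]]) auto
  have Q: "AE z in PM N. (z (N-1) \<in> A \<longrightarrow>
      rh (N-1) (restrict z {..<N-1}) * ennreal (G (z (N-1))) \<le> ennreal (P z)) \<and> P z = P1 z"
    using PL RR PP1 by eventually_elim (auto simp: GA)
  have Hj: "AE z in PM N. z j \<in> A \<longrightarrow>
      rh (N-1) (restrict (z \<circ> sig N j) {..<N-1}) * ennreal (G (z j)) \<le> ennreal (P1 z)" if jN: "j < N" for j
    using AE_sig[OF jN Q] PP1 AE_space
  proof eventually_elim
    case (elim z)
    show ?case
    proof
      assume zj: "z j \<in> A"
      have ps: "P (z \<circ> sig N j) = P z" using P_sym sig_permutes[OF jN] elim(3) dkc by simp
      show "rh (N-1) (restrict (z \<circ> sig N j) {..<N-1}) * ennreal (G (z j)) \<le> ennreal (P1 z)"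
        using elim(1,2) zj ps sig_N[OF jN] by auto
    qed
  qed
  interpret RHO2 M N P1 A G by (intro RHO2.intro RHO2_axioms.intro RHO.intro RHO_axioms.intro SFM.intro sfin P1m Hj N1)
  define Ae where "Ae = {x \<in> A. \<gamma> x > \<epsilon>}"
  have AeA: "Ae \<subseteq> A" by (auto simp: Ae_def)
  have AeG: "\<And>x. x \<in> Ae \<Longrightarrow> \<epsilon> < G x" by (auto simp: Ae_def GA)
  have Ae_eq: "Ae = {x \<in> space M. \<epsilon> < G x}"
    using \<epsilon>_pos sets.sets_into_space[OF A_meas] by (auto simp: Ae_def G_def split: split_indicator)
  have Ae_sets: "Ae \<in> sets M" unfolding Ae_eq using Gm by measurable
  have intP1: "(\<integral>\<^sup>+ z. ennreal (P1 z) \<partial>PM N) = 1"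
  proof -
    have "(\<integral>\<^sup>+ z. ennreal (P z) \<partial>PM N) = (\<integral>\<^sup>+ z. ennreal (P1 z) \<partial>PM N)"
      using PP1 by (intro nn_integral_cong_AE) auto
    then show ?thesis using P_int by (simp add: dkc nn_integral_completion)
  qed
  have rm: "\<And>j. j \<le> N \<Longrightarrow> (\<lambda>z. restrict z {..<j}) \<in> PM N \<rightarrow>\<^sub>M PM j"
    by (intro measurable_restrict_subset) auto
  have fin: "emeasure M Ae < \<infinity>"
  proof -
    have F1: "AE z in PM N. (\<forall>i. N-1 \<le> i \<and> i < N \<longrightarrow> z i \<in> Ae) \<longrightarrow>
        ennreal (\<epsilon>^(N-(N-1))) * rh (N-1) (restrict z {..<N-1}) \<le> ennreal (P1 z)"
      using lemF[OF \<epsilon>_pos AeA AeG, of "N-1"] by auto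
    have e1: "N - (N-1) = 1" using N1 by simp
    have e1s: "N - (N - Suc 0) = Suc 0" using N1 by simp
    define f where "f z = ennreal \<epsilon> * rh (N-1) (restrict z {..<N-1}) * indicator Ae (z (N-1))" for z
    have rhm: "(\<lambda>z. rh (N-1) (restrict z {..<N-1})) \<in> borel_measurable (PM N)"
      using measurable_comp[OF rm[of "N-1"] rh_meas[of "N-1"]] by (simp add: comp_def)
    have im: "(\<lambda>z. indicator Ae (z (N-1)) :: ennreal) \<in> borel_measurable (PM N)"
    proof -
      have "(\<lambda>z. z (N-1)) \<in> PM N \<rightarrow>\<^sub>M M" using N1 by (intro measurable_component_singleton) auto
      from measurable_comp[OF this borel_measurable_indicator[OF Ae_sets]] show ?thesis by (simp add: comp_def)
    qed
    have fm: "f \<in> borel_measurable (PM N)" unfolding f_def[abs_def] using rhm im by measurable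
    have "(\<integral>\<^sup>+ z. f z \<partial>PM N) \<le> (\<integral>\<^sup>+ z. ennreal (P1 z) \<partial>PM N)"
      using F1
    proof (intro nn_integral_mono_AE, eventually_elim)
      case (elim z)
      show ?case
      proof (cases "z (N-1) \<in> Ae")
        case True
        then have "\<forall>i. N-1 \<le> i \<and> i < N \<longrightarrow> z i \<in> Ae"
          by (metis Suc_diff_1 N1 le_antisym less_Suc_eq_le less_le_trans zero_less_one)
        then show ?thesis using elim True by (simp add: f_def e1s)
      qed (simp add: f_def)
    qed
    also have "\<dots> = 1" by (rule intP1)
    finally have le1: "(\<integral>\<^sup>+ z. f z \<partial>PM N) \<le> 1" .
    have sing: "(\<integral>\<^sup>+ t. indicator Ae (t 0) \<partial>PM 1) = emeasure M Ae"
    proof -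
      have e: "{..<1::nat} = {0}" by auto
      show ?thesis unfolding e using PS.product_nn_integral_singleton[of "indicator Ae" 0] Ae_sets
        by simp
    qed
    have "(\<integral>\<^sup>+ z. f z \<partial>PM N) = (\<integral>\<^sup>+ x. \<integral>\<^sup>+ t. f (join (N-1) N x t) \<partial>PM (N-(N-1)) \<partial>PM (N-1))"
      by (rule tonelli_xy[OF _ fm]) simp
    also have "\<dots> = (\<integral>\<^sup>+ x. (ennreal \<epsilon> * rh (N-1) x) * (\<integral>\<^sup>+ t. indicator Ae (t 0) \<partial>PM 1) \<partial>PM (N-1))"
    proof (intro nn_integral_cong)
      fix x assume x: "x \<in> space (PM (N-1))"
      have "\<And>t. f (join (N-1) N x t) = (ennreal \<epsilon> * rh (N-1) x) * indicator Ae (t 0)"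
        using restrict_join[of "N-1" N x] x N1 by (simp add: f_def join_def)
      then show "(\<integral>\<^sup>+ t. f (join (N-1) N x t) \<partial>PM (N-(N-1))) = (ennreal \<epsilon> * rh (N-1) x) * (\<integral>\<^sup>+ t. indicator Ae (t 0) \<partial>PM 1)"
        unfolding e1 using Ae_sets by (subst nn_integral_cmult[symmetric]) auto
    qed
    also have "\<dots> = ennreal \<epsilon> * emeasure M Ae * (\<integral>\<^sup>+ x. rh (N-1) x \<partial>PM (N-1))"
      unfolding sing using rh_meas[of "N-1"]
      by (subst nn_integral_cmult[symmetric]) (auto simp: mult_ac)
    finally have eqf: "(\<integral>\<^sup>+ z. f z \<partial>PM N) = ennreal \<epsilon> * emeasure M Ae * (\<integral>\<^sup>+ x. rh (N-1) x \<partial>PM (N-1))" .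
    have i1: "(\<integral>\<^sup>+ x. rh (N-1) x \<partial>PM (N-1)) = 1"
      unfolding rh_def using tonelli_xy[of "N-1" N "\<lambda>z. ennreal (P1 z)"] P1m intP1 by simp
    have "ennreal \<epsilon> * emeasure M Ae \<le> 1" using le1 unfolding eqf i1 mult_1_right .
    show ?thesis
    proof (rule ccontr)
      assume "\<not> emeasure M Ae < \<infinity>"
      then have "emeasure M Ae = \<infinity>" by (cases "emeasure M Ae = \<infinity>") (auto simp: less_top)
      then have "ennreal \<epsilon> * emeasure M Ae = \<infinity>" using \<epsilon>_pos by (simp add: ennreal_mult_top)
      with \<open>ennreal \<epsilon> * emeasure M Ae \<le> 1\<close> show False by (simp add: top_unique)
    qed
  qed
  show ?thesis
  proof (intro conjI allI impI)
    show "emeasure M {x \<in> A. \<gamma> x > \<epsilon>} < \<infinity>" using fin unfolding Ae_def .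
    fix r :: real and U :: "(nat \<Rightarrow> 'a) \<Rightarrow> real" and m :: nat
    assume r: "1 \<le> r" and Um: "U \<in> borel_measurable (dk M N)"
      and Ufin: "(\<integral>\<^sup>+ x. ennreal (\<bar>U x\<bar> powr r * P x) \<partial>dk M N) < \<infinity>"
      and m1: "1 \<le> m" and mN1: "m \<le> N - 1"
    have mN: "m \<le> N" using mN1 by simp
    define c where "c = measure M Ae"
    have eAe: "emeasure M Ae = ennreal c"
      unfolding c_def using fin by (intro emeasure_eq_ennreal_measure) (simp add: less_top)
    have cpos: "c > 0" using A\<epsilon>_pos eAe unfolding Ae_def[symmetric] by (simp add: ennreal_less_zero_iff)
    define \<alpha> where "\<alpha> = 1 / (\<epsilon> * c)"
    have apos: "\<alpha> \<ge> 0" unfolding \<alpha>_def using cpos \<epsilon>_pos by simp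
    have alc: "\<alpha>^(N-m) * c^(N-m) = (1/\<epsilon>)^(N-m)"
      unfolding \<alpha>_def using cpos \<epsilon>_pos by (simp add: power_mult_distrib[symmetric])
    have "U \<in> borel_measurable (completion (PM N))" using Um dkc by simp
    from completion_ex_borel_measurable_real[OF this] obtain U1 where
      U1: "U1 \<in> borel_measurable (PM N)" "AE z in PM N. U z = U1 z" by blast
    define K1 where "K1 = (\<integral>\<^sup>+ z. ennreal (\<bar>U1 z\<bar> powr r * P1 z) \<partial>PM N)"
    have K: "(\<integral>\<^sup>+ x. ennreal (\<bar>U x\<bar> powr r * P x) \<partial>dk M N) = K1"
    proof -
      have "AE z in PM N. ennreal (\<bar>U z\<bar> powr r * P z) = ennreal (\<bar>U1 z\<bar> powr r * P1 z)"
        using U1(2) PP1 by eventually_elim simp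
      then show ?thesis unfolding dkc nn_integral_completion K1_def by (rule nn_integral_cong_AE)
    qed
    have K1fin: "K1 \<noteq> \<top>" using Ufin K by (simp add: less_top)
    define h where "h z = ennreal (\<bar>U1 z\<bar> powr r) * rh m (restrict z {..<m})" for z
    have rhm: "(\<lambda>z. rh m (restrict z {..<m})) \<in> borel_measurable (PM N)"
      using measurable_comp[OF rm[OF mN] rh_meas[OF mN]] by (simp add: comp_def)
    have hm: "h \<in> borel_measurable (PM N)" unfolding h_def[abs_def] using U1(1) rhm by measurable
    define I1 where "I1 y = (\<integral>\<^sup>+ x. h (join m N x y) \<partial>PM m)" for y
    have I1m: "I1 \<in> borel_measurable (PM (N-m))" unfolding I1_def[abs_def] by (rule meas_int_y[OF mN hm])
    define B where "B = PiE {..<N-m} (\<lambda>_. Ae)"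
    show "let A\<epsilon> = {x \<in> A. \<gamma> x > \<epsilon>};
            \<alpha> = 1 / (\<epsilon> * measure M A\<epsilon>);
            T = {y \<in> PiE {..<N - m} (\<lambda>_. A\<epsilon>).
                   (\<lambda>x. U (join m N x y)) \<in> borel_measurable (dk M m) \<and>
                   (\<integral>\<^sup>+ x. ennreal (\<bar>U (join m N x y)\<bar> powr r) * rho M N P m x \<partial>dk M m)
                     \<le> ennreal (\<alpha> ^ (N - m)) * (\<integral>\<^sup>+ x. ennreal (\<bar>U x\<bar> powr r * P x) \<partial>dk M N)}
        in \<not> (\<exists>S \<in> sets (dk M (N - m)). T \<subseteq> S \<and> emeasure (dk M (N - m)) S = 0)"
      unfolding Let_def Ae_def[symmetric] c_def[symmetric] \<alpha>_def[symmetric] B_def[symmetric] K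
    proof (rule notI, elim bexE conjE)
      fix S assume S: "S \<in> sets (dk M (N - m))" and TS: "{y \<in> B.
                   (\<lambda>x. U (join m N x y)) \<in> borel_measurable (dk M m) \<and>
                   (\<integral>\<^sup>+ x. ennreal (\<bar>U (join m N x y)\<bar> powr r) * rho M N P m x \<partial>dk M m)
                     \<le> ennreal (\<alpha> ^ (N - m)) * K1} \<subseteq> S"
        and S0: "emeasure (dk M (N - m)) S = 0"
      have notT: "AE y in PM (N-m). y \<notin> S"
      proof -
        have "S \<in> null_sets (completion (PM (N-m)))" using S S0 dkc by (simp add: null_sets_def)
        from AE_not_in[OF this] show ?thesis by (simp add: AE_completion_iff)
      qed
      have UU1: "AE y in PM (N-m). AE x in PM m. U (join m N x y) = U1 (join m N x y)"
        by (rule AE_join_yx[OF mN U1(2)])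
      have RH: "AE x in PM m. rho M N P m x = rh m x" by (rule rho_rh[OF mN PP1])
      have big: "AE y in PM (N-m). y \<in> B \<longrightarrow> ennreal (\<alpha>^(N-m)) * K1 < I1 y"
        using AE_space notT UU1
      proof eventually_elim
        case (elim y)
        show ?case
        proof
          assume yB: "y \<in> B"
          have meas: "(\<lambda>x. U (join m N x y)) \<in> borel_measurable (dk M m)"
            unfolding dkc
          proof (rule meas_completion_AE[OF _ elim(3)])
            show "(\<lambda>x. U1 (join m N x y)) \<in> borel_measurable (PM m)"
              using measurable_comp[OF join_meas1[OF mN elim(1)] U1(1)] by (simp add: comp_def)
          qed
          have ieq: "(\<integral>\<^sup>+ x. ennreal (\<bar>U (join m N x y)\<bar> powr r) * rho M N P m x \<partial>dk M m) = I1 y"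
            unfolding dkc nn_integral_completion I1_def h_def
          proof (rule nn_integral_cong_AE)
            show "AE x in PM m. ennreal (\<bar>U (join m N x y)\<bar> powr r) * rho M N P m x =
                ennreal (\<bar>U1 (join m N x y)\<bar> powr r) * rh m (restrict (join m N x y) {..<m})"
              using elim(3) RH AE_space by eventually_elim (simp add: restrict_join[OF mN])
          qed
          have "y \<notin> S" using elim(2) .
          then have "\<not> (\<integral>\<^sup>+ x. ennreal (\<bar>U (join m N x y)\<bar> powr r) * rho M N P m x \<partial>dk M m)
                     \<le> ennreal (\<alpha> ^ (N - m)) * K1"
            using TS yB meas by blast
          then show "ennreal (\<alpha>^(N-m)) * K1 < I1 y" using ieq by (simp add: not_le)
        qed
      qed
      have LF: "AE z in PM N. (\<forall>i. m \<le> i \<and> i < N \<longrightarrow> z i \<in> Ae) \<longrightarrow>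
          ennreal (\<epsilon>^(N-m)) * rh m (restrict z {..<m}) \<le> ennreal (P1 z)"
        using lemF[OF \<epsilon>_pos AeA AeG, of m] mN by auto
      have Fm: "AE y in PM (N-m). AE x in PM m. y \<in> B \<longrightarrow>
          ennreal (\<epsilon>^(N-m)) * rh m x \<le> ennreal (P1 (join m N x y))"
        using AE_join_yx[OF mN LF]
      proof eventually_elim
        case (elim y)
        show ?case
          using elim AE_space
        proof eventually_elim
          case (elim x)
          show ?case
          proof
            assume yB: "y \<in> B"
            have "\<forall>i. m \<le> i \<and> i < N \<longrightarrow> join m N x y i \<in> Ae"
            proof (intro allI impI)
              fix i assume i: "m \<le> i \<and> i < N"
              then have "i - m < N - m" by (simp add: diff_less_mono)
              then show "join m N x y i \<in> Ae" using yB i by (auto simp: join_def B_def PiE_def Pi_def)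
            qed
            then show "ennreal (\<epsilon>^(N-m)) * rh m x \<le> ennreal (P1 (join m N x y))"
              using elim restrict_join[OF mN] by simp
          qed
        qed
      qed
      have Bs: "B \<in> sets (PM (N-m))" unfolding B_def using Ae_sets by (intro sets_PiM_I_finite) auto
      have muB: "emeasure (PM (N-m)) B = ennreal c ^ (N-m)"
        unfolding B_def using Ae_sets by (subst PS.emeasure_PiM) (auto simp: eAe)
      define f where "f y = ennreal (\<alpha>^(N-m)) * K1 * indicator B y" for y
      define g where "g y = indicator B y * I1 y" for y
      have fm: "f \<in> borel_measurable (PM (N-m))" unfolding f_def[abs_def] using Bs by measurable
      have gm: "g \<in> borel_measurable (PM (N-m))" unfolding g_def[abs_def] using Bs I1m by measurable
      define k where "k = ennreal ((1/\<epsilon>)^(N-m))"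
      have intf: "(\<integral>\<^sup>+ y. f y \<partial>PM (N-m)) = k * K1"
      proof -
        have "(\<integral>\<^sup>+ y. f y \<partial>PM (N-m)) = ennreal (\<alpha>^(N-m)) * K1 * ennreal c ^ (N-m)"
          unfolding f_def using Bs by (simp add: nn_integral_cmult_indicator muB)
        also have "\<dots> = ennreal (\<alpha>^(N-m) * c^(N-m)) * K1"
          using apos cpos by (simp add: ennreal_power ennreal_mult mult_ac)
        finally show ?thesis unfolding alc k_def .
      qed
      have finf: "(\<integral>\<^sup>+ y. f y \<partial>PM (N-m)) \<noteq> \<infinity>"
        unfolding intf k_def using K1fin by (simp add: ennreal_mult_eq_top_iff)
      have AEfg: "AE y in PM (N-m). f y \<le> g y"
        using big by eventually_elim (auto simp: f_def g_def indicator_def)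
      have nAE: "\<not> (AE y in PM (N-m). g y \<le> f y)"
      proof
        assume "AE y in PM (N-m). g y \<le> f y"
        with big have "AE y in PM (N-m). y \<notin> B"
          by eventually_elim (auto simp: f_def g_def indicator_def)
        then have "B \<in> null_sets (PM (N-m))" using AE_iff_null_sets[OF Bs] by simp
        then have "emeasure (PM (N-m)) B = 0" by auto
        then show False using muB cpos by simp
      qed
      have less: "(\<integral>\<^sup>+ y. f y \<partial>PM (N-m)) < (\<integral>\<^sup>+ y. g y \<partial>PM (N-m))"
        by (rule nn_integral_less[OF fm gm finf AEfg nAE])
      define H where "H z = k * ennreal (\<bar>U1 z\<bar> powr r * P1 z)" for z
      have Hm: "H \<in> borel_measurable (PM N)" unfolding H_def[abs_def] using U1(1) P1m by measurable
      have "(\<integral>\<^sup>+ y. g y \<partial>PM (N-m)) \<le> (\<integral>\<^sup>+ y. \<integral>\<^sup>+ x. H (join m N x y) \<partial>PM m \<partial>PM (N-m))"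
      proof (rule nn_integral_mono_AE)
        show "AE y in PM (N-m). g y \<le> (\<integral>\<^sup>+ x. H (join m N x y) \<partial>PM m)"
          using Fm
        proof eventually_elim
          case (elim y)
          show ?case
          proof (cases "y \<in> B")
            case False then show ?thesis by (simp add: g_def)
          next
            case True
            have "g y = (\<integral>\<^sup>+ x. h (join m N x y) \<partial>PM m)" using True by (simp add: g_def I1_def)
            also have "\<dots> \<le> (\<integral>\<^sup>+ x. H (join m N x y) \<partial>PM m)"
            proof (rule nn_integral_mono_AE)
              show "AE x in PM m. h (join m N x y) \<le> H (join m N x y)"
                using elim AE_space
              proof eventually_elim
                case (elim x)
                have b: "rh m x \<le> k * ennreal (P1 (join m N x y))"
                  unfolding k_def using ennreal_scale_bound[OF \<epsilon>_pos] elim(1) True by blast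
                have "h (join m N x y) = ennreal (\<bar>U1 (join m N x y)\<bar> powr r) * rh m x"
                  using elim(2) by (simp add: h_def restrict_join[OF mN])
                also have "\<dots> \<le> ennreal (\<bar>U1 (join m N x y)\<bar> powr r) * (k * ennreal (P1 (join m N x y)))"
                  using b by (rule mult_left_mono) simp
                also have "\<dots> = H (join m N x y)"
                  using P1nn by (simp add: H_def ennreal_mult mult_ac)
                finally show ?case .
              qed
            qed
            finally show ?thesis .
          qed
        qed
      qed
      also have "\<dots> = (\<integral>\<^sup>+ z. H z \<partial>PM N)" by (rule tonelli_yx[OF mN Hm, symmetric])
      also have "\<dots> = k * K1" unfolding H_def K1_def
        using U1(1) P1m by (subst nn_integral_cmult) (auto)
      finally have "(\<integral>\<^sup>+ y. g y \<partial>PM (N-m)) \<le> k * K1" .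
      with less intf show False by simp
    qed
  qed
qed


end
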